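(* Let $G=(V,E)$ be a finite simple graph with nonempty vertex set and burning number $b(G)$. Consider the following procedure (the burning greedy permutation algorithm, BGP), which receives only $G$ as input. Choose $s_1\in V$ arbitrarily and set $k=1$. While $\bigcup_{i=1}^{k}N_{k-i}[s_i]\neq V$, let $s_{k+1}$ be any vertex $u\in V$ maximizing $d(u,\{s_1,\dots,s_k\})$ (ties broken arbitrarily) and increase $k$ by one. Return $(s_1,\dots,s_k)$. Then, for every choice made by this procedure, it terminates and returns a burning sequence of $G$ of length at most $3b(G)-2$; that is, BGP is a $(3-2/b(G))$-approximation algorithm for the graph burning problem.
   Context: For vertices $u,v$ of $G$, $d(u,v)$ is the number of edges on a shortest $u$–$v$ path ($+\infty$ if none exists), and for $S\subseteq V$, $d(u,S)=\min_{w\in S}d(u,w)$. For $v\in V$ and an integer $r\ge 0$, $N_r[v]=\{u\in V: d(u,v)\le r\}$ is the closed $r$-th neighborhood of $v$ (so $N_0[v]=\{v\}$). A burning sequence of length $k$ is a sequence $(s_1,\dots,s_k)$ of vertices of $G$ (repetitions allowed) such that $\bigcup_{i=1}^{k}N_{k-i}[s_i]=V$; equivalently, if in round $i$ vertex $s_i$ becomes burned and every neighbor of a vertex burned in an earlier round becomes burned, then all vertices are burned after round $k$. The burning number $b(G)$ is the minimum length of a burning sequence of $G$. *)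

theory Defs
  imports Main "HOL-Library.Extended_Nat"
begin

definition simple_graph :: "'a set \<Rightarrow> ('a \<Rightarrow> 'a \<Rightarrow> bool) \<Rightarrow> bool" where
  "simple_graph V E \<longleftrightarrow> finite V \<and> (\<forall>u v. E u v \<longrightarrow> u \<in> V \<and> v \<in> V)
     \<and> (\<forall>u v. E u v \<longrightarrow> E v u) \<and> (\<forall>u. \<not> E u u)"

definition is_walk :: "'a set \<Rightarrow> ('a \<Rightarrow> 'a \<Rightarrow> bool) \<Rightarrow> 'a list \<Rightarrow> bool" where
  "is_walk V E p \<longleftrightarrow> p \<noteq> [] \<and> set p \<subseteq> V \<and> (\<forall>i. Suc i < length p \<longrightarrow> E (p ! i) (p ! Suc i))"

definition dist :: "'a set \<Rightarrow> ('a \<Rightarrow> 'a \<Rightarrow> bool) \<Rightarrow> 'a \<Rightarrow> 'a \<Rightarrow> enat" where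
  "dist V E u v = (INF p \<in> {p. is_walk V E p \<and> hd p = u \<and> last p = v}. enat (length p - 1))"

definition dist_set :: "'a set \<Rightarrow> ('a \<Rightarrow> 'a \<Rightarrow> bool) \<Rightarrow> 'a \<Rightarrow> 'a set \<Rightarrow> enat" where
  "dist_set V E u S = (INF w \<in> S. dist V E u w)"

definition nbhd :: "'a set \<Rightarrow> ('a \<Rightarrow> 'a \<Rightarrow> bool) \<Rightarrow> nat \<Rightarrow> 'a \<Rightarrow> 'a set" where
  "nbhd V E r v = {u \<in> V. dist V E u v \<le> enat r}"

text \<open>Union of N_{k-i}[s_i], i = 1..k, for s = [s_1,...,s_k] (0-based list: s!i has radius k-1-i).\<close>
definition burned :: "'a set \<Rightarrow> ('a \<Rightarrow> 'a \<Rightarrow> bool) \<Rightarrow> 'a list \<Rightarrow> 'a set" where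
  "burned V E s = (\<Union>i<length s. nbhd V E (length s - 1 - i) (s ! i))"

definition burning_seq :: "'a set \<Rightarrow> ('a \<Rightarrow> 'a \<Rightarrow> bool) \<Rightarrow> 'a list \<Rightarrow> bool" where
  "burning_seq V E s \<longleftrightarrow> set s \<subseteq> V \<and> burned V E s = V"

definition burning_number :: "'a set \<Rightarrow> ('a \<Rightarrow> 'a \<Rightarrow> bool) \<Rightarrow> nat" where
  "burning_number V E = (LEAST k. \<exists>s. length s = k \<and> burning_seq V E s)"

text \<open>A (possibly unfinished) run of BGP: s_1 in V arbitrary; each further vertex
  s_{j+1} is chosen only while the loop condition holds for (s_1..s_j), and it
  maximizes d(u,{s_1..s_j}) over u in V.\<close>
definition bgp_run :: "'a set \<Rightarrow> ('a \<Rightarrow> 'a \<Rightarrow> bool) \<Rightarrow> 'a list \<Rightarrow> bool" where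
  "bgp_run V E s \<longleftrightarrow> s \<noteq> [] \<and> set s \<subseteq> V \<and>
     (\<forall>j. 1 \<le> j \<and> j < length s \<longrightarrow>
        burned V E (take j s) \<noteq> V \<and>
        (\<forall>u\<in>V. dist_set V E u (set (take j s)) \<le> dist_set V E (s ! j) (set (take j s))))"

definition bgp_output :: "'a set \<Rightarrow> ('a \<Rightarrow> 'a \<Rightarrow> bool) \<Rightarrow> 'a list \<Rightarrow> bool" where
  "bgp_output V E s \<longleftrightarrow> bgp_run V E s \<and> burned V E s = V"

end

theory Submission
  imports Defs
begin

lemma walk_single: "is_walk V E [x] \<longleftrightarrow> x \<in> V"
  by (auto simp: is_walk_def)

lemma walk_cons2: "is_walk V E (x#y#p) \<longleftrightarrow> x \<in> V \<and> E x y \<and> is_walk V E (y#p)"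
proof
  assume h: "is_walk V E (x#y#p)"
  have "\<And>i. Suc i < length (y#p) \<Longrightarrow> E ((y#p) ! i) ((y#p) ! Suc i)"
  proof -
    fix i assume "Suc i < length (y#p)"
    then have "Suc (Suc i) < length (x#y#p)" by simp
    then have "E ((x#y#p) ! Suc i) ((x#y#p) ! Suc (Suc i))" using h unfolding is_walk_def by blast
    then show "E ((y#p) ! i) ((y#p) ! Suc i)" by simp
  qed
  moreover have "E x y" using h unfolding is_walk_def by (metis One_nat_def Suc_less_eq length_Cons nth_Cons_0 nth_Cons_Suc zero_less_Suc)
  ultimately show "x \<in> V \<and> E x y \<and> is_walk V E (y#p)" using h unfolding is_walk_def by auto
next
  assume h: "x \<in> V \<and> E x y \<and> is_walk V E (y#p)"
  show "is_walk V E (x#y#p)" unfolding is_walk_def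
  proof (intro conjI allI impI)
    show "set (x#y#p) \<subseteq> V" using h unfolding is_walk_def by auto
    fix i assume "Suc i < length (x#y#p)"
    then show "E ((x#y#p) ! i) ((x#y#p) ! Suc i)" using h unfolding is_walk_def
      by (cases i) auto
  qed simp
qed

lemma walk_append: "is_walk V E p \<Longrightarrow> is_walk V E q \<Longrightarrow> last p = hd q \<Longrightarrow> is_walk V E (p @ tl q)"
proof (induction p rule: induct_list012)
  case 1 then show ?case by (simp add: is_walk_def)
next
  case (2 x) then show ?case by (cases q) auto
next
  case (3 x y zs)
  have "is_walk V E ((y#zs) @ tl q)" using 3 by (simp add: walk_cons2)
  then show ?case using 3 by (simp add: walk_cons2)
qed

lemma walk_rev: "(\<forall>u v. E u v \<longrightarrow> E v u) \<Longrightarrow> is_walk V E p \<Longrightarrow> is_walk V E (rev p)"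
proof (induction p rule: induct_list012)
  case 1 then show ?case by simp
next
  case (2 x) then show ?case by simp
next
  case (3 x y zs)
  have a: "is_walk V E (rev (y#zs))" using 3 by (simp add: walk_cons2)
  have "x \<in> V" "E x y" "y \<in> V" using 3(4) by (auto simp: walk_cons2 walk_single is_walk_def)
  then have b: "is_walk V E [y, x]" using 3(3) by (simp add: walk_cons2 walk_single)
  have "is_walk V E (rev (y#zs) @ tl [y,x])"
    by (rule walk_append[OF a b]) simp
  then show ?case by simp
qed

lemma walk_dist_le: "is_walk V E p \<Longrightarrow> dist V E (hd p) (last p) \<le> enat (length p - 1)"
  unfolding dist_def by (rule INF_lower) auto

lemma dist_finite_ex:
  assumes "dist V E u v = enat n"
  shows "\<exists>p. is_walk V E p \<and> hd p = u \<and> last p = v \<and> length p - 1 = n"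
proof -
  let ?A = "{p. is_walk V E p \<and> hd p = u \<and> last p = v}"
  have ne: "?A \<noteq> {}"
  proof
    assume "?A = {}"
    then have "dist V E u v = Inf {}" unfolding dist_def by (metis image_empty)
    then have "dist V E u v = \<infinity>" by (simp add: top_enat_def)
    then show False using assms by simp
  qed
  then obtain p0 where "p0 \<in> ?A" by blast
  then have "Inf ((\<lambda>p. enat (length p - 1)) ` ?A) \<in> (\<lambda>p. enat (length p - 1)) ` ?A"
    by (intro wellorder_InfI) blast
  then show ?thesis using assms unfolding dist_def by auto
qed

lemma dist_refl: "v \<in> V \<Longrightarrow> dist V E v v = 0"
proof -
  assume "v \<in> V"
  then have "dist V E v v \<le> 0" using walk_dist_le[of V E "[v]"] by (simp add: walk_single zero_enat_def)
  then show ?thesis by simp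
qed

lemma dist_sym:
  assumes "simple_graph V E" shows "dist V E u v = dist V E v u"
proof -
  have *: "dist V E x y \<le> dist V E y x" for x y
  proof (cases "dist V E y x")
    case (enat n)
    then obtain p where p: "is_walk V E p" "hd p = y" "last p = x" "length p - 1 = n"
      using dist_finite_ex[OF enat] by blast
    have w: "is_walk V E (rev p)" using walk_rev p(1) assms unfolding simple_graph_def by blast
    have "p \<noteq> []" using p(1) by (simp add: is_walk_def)
    then have "hd (rev p) = x" "last (rev p) = y" using p by (auto simp: hd_rev last_rev)
    then show ?thesis using walk_dist_le[OF w] p enat by simp
  qed simp
  show ?thesis using *[of u v] *[of v u] by simp
qed

lemma dist_triangle: "dist V E u w \<le> dist V E u v + dist V E v w"
proof (cases "dist V E u v")
  case (enat m)
  show ?thesis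
  proof (cases "dist V E v w")
    case (enat n)
    obtain p where p: "is_walk V E p" "hd p = u" "last p = v" "length p - 1 = m"
      using dist_finite_ex[OF \<open>dist V E u v = enat m\<close>] by blast
    obtain q where q: "is_walk V E q" "hd q = v" "last q = w" "length q - 1 = n"
      using dist_finite_ex[OF enat] by blast
    have w: "is_walk V E (p @ tl q)" using walk_append p q by metis
    have pne: "p \<noteq> []" "q \<noteq> []" using p q by (auto simp: is_walk_def)
    have "hd (p @ tl q) = u" using p pne by simp
    moreover have "last (p @ tl q) = w" using p q pne
      by (cases "tl q = []") (auto simp: last_tl, metis last_ConsL list.collapse)
    moreover have "length (p @ tl q) - 1 = m + n" using p q pne by (cases p; cases q) auto
    ultimately show ?thesis using walk_dist_le[OF w] \<open>dist V E u v = enat m\<close> enat by simp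
  qed simp
qed simp

lemma dist_set_le: "w \<in> S \<Longrightarrow> dist_set V E u S \<le> dist V E u w"
  unfolding dist_set_def by (rule INF_lower)

lemma dist_set_mono: "S \<subseteq> T \<Longrightarrow> dist_set V E u T \<le> dist_set V E u S"
  unfolding dist_set_def by (rule INF_superset_mono) auto

lemma dist_set_attain: "S \<noteq> {} \<Longrightarrow> \<exists>w\<in>S. dist_set V E u S = dist V E u w"
proof -
  assume "S \<noteq> {}"
  then obtain w where "w \<in> S" by blast
  then have "Inf ((\<lambda>w. dist V E u w) ` S) \<in> (\<lambda>w. dist V E u w) ` S"
    by (intro wellorder_InfI) blast
  then show ?thesis unfolding dist_set_def by auto
qed

lemma burned_sub: "burned V E s \<subseteq> V"
  unfolding burned_def nbhd_def by auto

lemma exists_burning_seq: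
  assumes "simple_graph V E" shows "\<exists>s. burning_seq V E s"
proof -
  have "finite V" using assms unfolding simple_graph_def by blast
  then obtain xs where xs: "set xs = V" using finite_list by blast
  have "V \<subseteq> burned V E xs"
  proof
    fix v assume "v \<in> V"
    then obtain i where i: "i < length xs" "xs ! i = v" using xs by (metis in_set_conv_nth)
    have "dist V E v v = 0" using dist_refl \<open>v \<in> V\<close> by metis
    then have "v \<in> nbhd V E (length xs - 1 - i) (xs ! i)" using i \<open>v \<in> V\<close> unfolding nbhd_def by simp
    then show "v \<in> burned V E xs" unfolding burned_def using i by blast
  qed
  then show ?thesis using burned_sub[of V E xs] xs unfolding burning_seq_def by blast
qed

lemma bn_props:
  assumes "simple_graph V E" "V \<noteq> {}"
  shows "\<exists>t. length t = burning_number V E \<and> burning_seq V E t" "burning_number V E \<ge> 1"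
proof -
  obtain s where "burning_seq V E s" using exists_burning_seq assms(1) by blast
  then show ex: "\<exists>t. length t = burning_number V E \<and> burning_seq V E t"
  proof -
    have "\<exists>k. \<exists>s'. length s' = k \<and> burning_seq V E s'" using \<open>burning_seq V E s\<close> by blast
    then show ?thesis unfolding burning_number_def by (rule LeastI_ex)
  qed
  then obtain t where t: "length t = burning_number V E" "burning_seq V E t" by blast
  show "burning_number V E \<ge> 1"
  proof (rule ccontr)
    assume "\<not> burning_number V E \<ge> 1"
    then have "length t = 0" using t by linarith
    then have "t = []" by simp
    then have "burned V E t = {}" unfolding burned_def by simp
    then show False using t assms(2) unfolding burning_seq_def by simp
  qed
qed

lemma enat_lt_aux: "(x::enat) < enat (2 * b - 1) \<Longrightarrow> b \<ge> 1 \<Longrightarrow> x \<le> enat (2 * b - 2)"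
  by (cases x) auto

lemma run_bound:
  assumes G: "simple_graph V E" and ne: "V \<noteq> {}" and run: "bgp_run V E s"
  shows "length s \<le> 3 * burning_number V E - 2"
proof (rule ccontr)
  define b where "b = burning_number V E"
  assume "\<not> length s \<le> 3 * burning_number V E - 2"
  then have len: "length s > 3 * b - 2" unfolding b_def by simp
  have b1: "b \<ge> 1" using bn_props[OF G ne] b_def by simp
  obtain t where t: "length t = b" "burning_seq V E t" using bn_props[OF G ne] b_def by blast
  have sV: "set s \<subseteq> V" using run unfolding bgp_run_def by blast
  have cond: "\<And>j. 1 \<le> j \<Longrightarrow> j < length s \<Longrightarrow> burned V E (take j s) \<noteq> V \<and>
        (\<forall>u\<in>V. dist_set V E u (set (take j s)) \<le> dist_set V E (s ! j) (set (take j s)))"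
    using run unfolding bgp_run_def by blast
  have blen: "b < length s" using len b1 by simp
  have sbV: "s ! b \<in> V" using sV blen by (simp add: subsetD)
  show False
  proof (cases "dist_set V E (s ! b) (set (take b s)) \<ge> enat (2 * b - 1)")
    case True
    have pair: "dist V E (s ! j) (s ! i) \<ge> enat (2 * b - 1)" if ij: "i < j" "j \<le> b" for i j
    proof -
      have jl: "j < length s" using ij blen by simp
      have i1: "i < length (take j s)" using ij jl by simp
      have i2: "take j s ! i = s ! i" using ij by simp
      have "s ! i \<in> set (take j s)" using nth_mem[OF i1] i2 by simp
      then have "dist V E (s ! j) (s ! i) \<ge> dist_set V E (s ! j) (set (take j s))" by (rule dist_set_le)
      moreover have "dist_set V E (s ! j) (set (take j s)) \<ge> dist_set V E (s ! b) (set (take j s))"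
        using cond[of j] ij jl sbV by simp
      moreover have "dist_set V E (s ! b) (set (take j s)) \<ge> dist_set V E (s ! b) (set (take b s))"
        using ij by (intro dist_set_mono set_take_subset_set_take)
      ultimately show ?thesis using True by (meson order_trans)
    qed
    have cover: "\<exists>i<b. dist V E (s ! j) (t ! i) \<le> enat (b - 1 - i)" if "j \<le> b" for j
    proof -
      have "s ! j \<in> V" using sV blen that by (simp add: subsetD)
      then have "s ! j \<in> burned V E t" using t unfolding burning_seq_def by simp
      then show ?thesis using t unfolding burned_def nbhd_def by auto
    qed
    define f where "f j = (SOME i. i < b \<and> dist V E (s ! j) (t ! i) \<le> enat (b - 1 - i))" for j
    have fP: "f j < b \<and> dist V E (s ! j) (t ! f j) \<le> enat (b - 1 - f j)" if "j \<le> b" for j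
      unfolding f_def using someI_ex[OF cover[OF that]] .
    have "\<not> inj_on f {..b}"
    proof
      assume "inj_on f {..b}"
      then have "card (f ` {..b}) = b + 1" by (simp add: card_image)
      moreover have "f ` {..b} \<subseteq> {..<b}" using fP by auto
      then have "card (f ` {..b}) \<le> b" using card_mono[of "{..<b}"] by fastforce
      ultimately show False by simp
    qed
    then obtain j1 j2 where jj: "j1 \<le> b" "j2 \<le> b" "j1 \<noteq> j2" "f j1 = f j2"
      unfolding inj_on_def by auto
    have key: "\<not> (i < j \<and> j \<le> b \<and> f i = f j)" for i j
    proof
      assume h: "i < j \<and> j \<le> b \<and> f i = f j"
      let ?c = "t ! f j" and ?r = "b - 1 - f j"
      have a: "dist V E (s ! j) ?c \<le> enat ?r" using fP h by simp
      have c: "dist V E (s ! i) ?c \<le> enat ?r" using fP[of i] h by simp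
      have "dist V E (s ! j) (s ! i) \<le> dist V E (s ! j) ?c + dist V E ?c (s ! i)"
        by (rule dist_triangle)
      also have "\<dots> = dist V E (s ! j) ?c + dist V E (s ! i) ?c" using dist_sym[OF G] by metis
      also have "\<dots> \<le> enat ?r + enat ?r" using a c by (intro add_mono)
      also have "\<dots> = enat (2 * ?r)" by simp
      finally have "enat (2 * b - 1) \<le> enat (2 * ?r)" using pair[of i j] h by (meson order_trans)
      then show False using b1 by simp
    qed
    show False using key[of j1 j2] key[of j2 j1] jj by (cases "j1 < j2") auto
  next
    case False
    have lt: "dist_set V E (s ! b) (set (take b s)) < enat (2 * b - 1)" using False by simp
    have "V \<subseteq> burned V E (take (3 * b - 2) s)"
    proof
      fix u assume u: "u \<in> V"
      have "dist_set V E u (set (take b s)) \<le> dist_set V E (s ! b) (set (take b s))"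
        using cond[of b] b1 blen u by simp
      then have lu: "dist_set V E u (set (take b s)) < enat (2 * b - 1)" using lt by simp
      have sne: "set (take b s) \<noteq> {}" using b1 blen by (cases s) auto
      obtain w where w: "w \<in> set (take b s)" "dist_set V E u (set (take b s)) = dist V E u w"
        using dist_set_attain[OF sne, of V E u] by blast
      then obtain i where i0: "i < length (take b s)" "take b s ! i = w"
        by (metis in_set_conv_nth)
      then have i: "i < b" "s ! i = w" by auto
      have "dist V E u (s ! i) < enat (2 * b - 1)" using lu w(2) i(2) by metis
      then have dl: "dist V E u (s ! i) \<le> enat (2 * b - 2)" using enat_lt_aux b1 by blast
      let ?k = "3 * b - 2"
      have il: "i < length (take ?k s)" using i len b1 by simp
      have tn: "take ?k s ! i = s ! i" using i b1 by simp
      have lk: "length (take ?k s) = ?k" using len by simp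
      have "2 * b - 2 \<le> length (take ?k s) - 1 - i" unfolding lk using i(1) b1 by linarith
      then have "enat (2 * b - 2) \<le> enat (length (take ?k s) - 1 - i)" by simp
      then have "dist V E u (take ?k s ! i) \<le> enat (length (take ?k s) - 1 - i)"
        using dl tn by (metis order_trans)
      then have "u \<in> nbhd V E (length (take ?k s) - 1 - i) (take ?k s ! i)"
        using u unfolding nbhd_def by blast
      then show "u \<in> burned V E (take ?k s)" unfolding burned_def using il by blast
    qed
    then have eqV: "burned V E (take (3 * b - 2) s) = V"
      using burned_sub[of V E "take (3 * b - 2) s"] by (rule equalityI[rotated])
    have h1: "1 \<le> 3 * b - 2" using b1 by linarith
    have h2: "3 * b - 2 < length s" using len by simp
    have "burned V E (take (3 * b - 2) s) \<noteq> V" using conjunct1[OF cond[OF h1 h2]] .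
    then show False using eqV by contradiction
  qed
qed

lemma run_extend:
  assumes G: "simple_graph V E" and run: "bgp_run V E s" and nb: "burned V E s \<noteq> V"
  shows "\<exists>u. bgp_run V E (s @ [u])"
proof -
  have fin: "finite V" using G unfolding simple_graph_def by blast
  have "s \<noteq> []" "set s \<subseteq> V" using run unfolding bgp_run_def by auto
  then have ne: "V \<noteq> {}" by (cases s) auto
  let ?f = "\<lambda>v. dist_set V E v (set s)"
  have "Max (?f ` V) \<in> ?f ` V" using fin ne by (intro Max_in) auto
  then obtain u where u: "u \<in> V" "?f u = Max (?f ` V)" by auto
  have umax: "\<forall>v\<in>V. ?f v \<le> ?f u" using u fin by auto
  have all: "\<forall>j. 1 \<le> j \<and> j < length (s @ [u]) \<longrightarrow> burned V E (take j (s @ [u])) \<noteq> V \<and>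
        (\<forall>v\<in>V. dist_set V E v (set (take j (s @ [u]))) \<le> dist_set V E ((s @ [u]) ! j) (set (take j (s @ [u]))))"
  proof (intro allI impI)
    fix j assume j: "1 \<le> j \<and> j < length (s @ [u])"
    show "burned V E (take j (s @ [u])) \<noteq> V \<and>
        (\<forall>v\<in>V. dist_set V E v (set (take j (s @ [u]))) \<le> dist_set V E ((s @ [u]) ! j) (set (take j (s @ [u]))))"
    proof (cases "j < length s")
      case True
      then show ?thesis using run j unfolding bgp_run_def by (simp add: nth_append)
    next
      case False
      then have "j = length s" using j by simp
      then show ?thesis using nb umax by simp
    qed
  qed
  have "bgp_run V E (s @ [u])" unfolding bgp_run_def using all \<open>set s \<subseteq> V\<close> u by simp
  then show ?thesis by blast
qed

lemma output_exists:
  assumes G: "simple_graph V E" and ne: "V \<noteq> {}"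
  shows "\<exists>s. bgp_output V E s"
proof -
  have main: "\<And>s. bgp_run V E s \<Longrightarrow> \<exists>t. bgp_output V E t"
  proof -
    fix s
    show "bgp_run V E s \<Longrightarrow> \<exists>t. bgp_output V E t"
    proof (induction "3 * burning_number V E - 2 - length s" arbitrary: s rule: less_induct)
      case less
      show ?case
      proof (cases "burned V E s = V")
        case True then show ?thesis using less.prems unfolding bgp_output_def by blast
      next
        case False
        then obtain u where r: "bgp_run V E (s @ [u])" using run_extend[OF G less.prems] by blast
        have "length (s @ [u]) \<le> 3 * burning_number V E - 2" using run_bound[OF G ne r] .
        then have "3 * burning_number V E - 2 - length (s @ [u]) < 3 * burning_number V E - 2 - length s"
          by simp
        then show ?thesis using less.hyps r by blast
      qed
    qed
  qed
  obtain v where "v \<in> V" using ne by blast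
  then have "bgp_run V E [v]" unfolding bgp_run_def by simp
  then show ?thesis using main by blast
qed

theorem theorem2:
  fixes V :: "'a set" and E :: "'a \<Rightarrow> 'a \<Rightarrow> bool"
  assumes "simple_graph V E" and "V \<noteq> {}"
  shows "(\<forall>s. bgp_run V E s \<longrightarrow> length s \<le> 3 * burning_number V E - 2)
       \<and> (\<exists>s. bgp_output V E s)
       \<and> (\<forall>s. bgp_output V E s \<longrightarrow>
              burning_seq V E s \<and> length s \<le> 3 * burning_number V E - 2)"
  using run_bound[OF assms] output_exists[OF assms]
  unfolding bgp_output_def burning_seq_def bgp_run_def[of V E] by blast

end
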